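(* Let $f\colon[a,b]\to\mathbb{R}$ be Laplace integrable on $[a,b]$ and have the intermediate value (Darboux) property on $[a,b]$. Let $g\colon[a,b]\to\mathbb{R}$ be Laplace integrable on $[a,b]$ and non-negative, and suppose $fg$ is Laplace integrable on $[a,b]$. Then there is $\xi\in[a,b]$ with $\int_a^bfg=f(\xi)\int_a^bg$. In particular, $\int_a^bf=f(\xi)(b-a)$ for some $\xi\in[a,b]$.
   Context: Laplace integral on $[a,b]$: with lower/upper Laplace derivates $\underline{LD}_1F(x)$, $\overline{LD}_1F(x)$ being the minimum of the $\liminf$'s, resp. maximum of the $\limsup$'s, as $s\to\infty$ of $s^2\int_0^\delta e^{-st}[F(x+t)-F(x)]dt$ and $(-s^2)\int_0^\delta e^{-st}[F(x-t)-F(x)]dt$ (one-sided at endpoints), a major function of $f$ is a continuous $U$ with $\underline{LD}_1U\geqslant f$, $\underline{LD}_1U>-\infty$ everywhere on $[a,b]$, a minor function a continuous $V$ with $\overline{LD}_1V\leqslant f$, $\overline{LD}_1V<\infty$ everywhere, and $f$ is Laplace integrable if $\sup_V(V(b)-V(a))=\inf_U(U(b)-U(a))$ is finite, this value being $\int_a^bf$. *)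

theory Defs
  imports "HOL-Analysis.Analysis"
begin

definition lap_right :: "(real \<Rightarrow> real) \<Rightarrow> real \<Rightarrow> real \<Rightarrow> real \<Rightarrow> real" where
  "lap_right F x \<delta> s = s\<^sup>2 * integral {0..\<delta>} (\<lambda>t. exp (- s * t) * (F (x + t) - F x))"

definition lap_left :: "(real \<Rightarrow> real) \<Rightarrow> real \<Rightarrow> real \<Rightarrow> real \<Rightarrow> real" where
  "lap_left F x \<delta> s = - (s\<^sup>2) * integral {0..\<delta>} (\<lambda>t. exp (- s * t) * (F (x - t) - F x))"

definition lower_LD :: "real \<Rightarrow> real \<Rightarrow> (real \<Rightarrow> real) \<Rightarrow> real \<Rightarrow> ereal" where
  "lower_LD a b F x =
     (if x = a then Liminf at_top (\<lambda>s. ereal (lap_right F x (b - x) s))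
      else if x = b then Liminf at_top (\<lambda>s. ereal (lap_left F x (x - a) s))
      else min (Liminf at_top (\<lambda>s. ereal (lap_right F x (b - x) s)))
               (Liminf at_top (\<lambda>s. ereal (lap_left F x (x - a) s))))"

definition upper_LD :: "real \<Rightarrow> real \<Rightarrow> (real \<Rightarrow> real) \<Rightarrow> real \<Rightarrow> ereal" where
  "upper_LD a b F x =
     (if x = a then Limsup at_top (\<lambda>s. ereal (lap_right F x (b - x) s))
      else if x = b then Limsup at_top (\<lambda>s. ereal (lap_left F x (x - a) s))
      else max (Limsup at_top (\<lambda>s. ereal (lap_right F x (b - x) s)))
               (Limsup at_top (\<lambda>s. ereal (lap_left F x (x - a) s))))"

definition laplace_major :: "real \<Rightarrow> real \<Rightarrow> (real \<Rightarrow> real) \<Rightarrow> (real \<Rightarrow> real) \<Rightarrow> bool" where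
  "laplace_major a b f U \<longleftrightarrow> continuous_on {a..b} U \<and>
     (\<forall>x\<in>{a..b}. lower_LD a b U x \<ge> ereal (f x) \<and> lower_LD a b U x > -\<infinity>)"

definition laplace_minor :: "real \<Rightarrow> real \<Rightarrow> (real \<Rightarrow> real) \<Rightarrow> (real \<Rightarrow> real) \<Rightarrow> bool" where
  "laplace_minor a b f V \<longleftrightarrow> continuous_on {a..b} V \<and>
     (\<forall>x\<in>{a..b}. upper_LD a b V x \<le> ereal (f x) \<and> upper_LD a b V x < \<infinity>)"

definition laplace_lower_int :: "real \<Rightarrow> real \<Rightarrow> (real \<Rightarrow> real) \<Rightarrow> ereal" where
  "laplace_lower_int a b f = (SUP V\<in>{V. laplace_minor a b f V}. ereal (V b - V a))"

definition laplace_upper_int :: "real \<Rightarrow> real \<Rightarrow> (real \<Rightarrow> real) \<Rightarrow> ereal" where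
  "laplace_upper_int a b f = (INF U\<in>{U. laplace_major a b f U}. ereal (U b - U a))"

definition laplace_integrable :: "real \<Rightarrow> real \<Rightarrow> (real \<Rightarrow> real) \<Rightarrow> bool" where
  "laplace_integrable a b f \<longleftrightarrow>
     laplace_lower_int a b f = laplace_upper_int a b f \<and> \<bar>laplace_upper_int a b f\<bar> \<noteq> \<infinity>"

definition laplace_integral :: "real \<Rightarrow> real \<Rightarrow> (real \<Rightarrow> real) \<Rightarrow> real" where
  "laplace_integral a b f = real_of_ereal (laplace_upper_int a b f)"

definition darboux_on :: "real set \<Rightarrow> (real \<Rightarrow> real) \<Rightarrow> bool" where
  "darboux_on S f \<longleftrightarrow> (\<forall>x\<in>S. \<forall>y\<in>S. \<forall>c. x \<le> y \<and> min (f x) (f y) \<le> c \<and> c \<le> max (f x) (f y)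
      \<longrightarrow> (\<exists>z\<in>{x..y}. f z = c))"

end

theory Submission
  imports Defs "HOL-Real_Asymp.Real_Asymp"
begin


lemma cont_shift:
  fixes F :: "real \<Rightarrow> real"
  assumes "continuous_on {a..b} F" "x \<in> {a..b}"
  shows "continuous_on {0..b-x} (\<lambda>t. F (x + t))"
proof -
  have "continuous_on {0..b-x} (\<lambda>t. t + x)" by (intro continuous_intros)
  moreover have "(\<lambda>t. t + x) ` {0..b-x} \<subseteq> {a..b}" using assms(2) by auto
  ultimately have "continuous_on {0..b-x} (\<lambda>t. F (t + x))" using continuous_on_compose2[OF assms(1)] by blast
  then show ?thesis by (simp add: add.commute)
qed

lemma integrable_R:
  fixes F :: "real \<Rightarrow> real"
  assumes "continuous_on {a..b} F" "x \<in> {a..b}"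
  shows "(\<lambda>t. exp (- s * t) * (F (x + t) - F x)) integrable_on {0..b-x}"
proof (rule integrable_continuous_interval)
  show "continuous_on {0..b-x} (\<lambda>t. exp (- s * t) * (F (x + t) - F x))"
  proof (rule continuous_on_mult)
    show "continuous_on {0..b - x} (\<lambda>t. exp (- s * t))" by (intro continuous_intros)
    show "continuous_on {0..b - x} (\<lambda>t. F (x + t) - F x)"
      by (rule continuous_on_diff[OF cont_shift[OF assms] continuous_on_const])
  qed
qed

lemma R_add:
  assumes "continuous_on {a..b} F" "continuous_on {a..b} G" "x \<in> {a..b}"
  shows "lap_right (\<lambda>y. F y + G y) x (b-x) s = lap_right F x (b-x) s + lap_right G x (b-x) s"
proof -
  have "integral {0..b-x} (\<lambda>t. exp (- s * t) * ((F (x+t) + G (x+t)) - (F x + G x)))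
     = integral {0..b-x} (\<lambda>t. exp (- s * t) * (F (x + t) - F x) + exp (- s * t) * (G (x + t) - G x))"
    by (simp add: algebra_simps)
  also have "\<dots> = integral {0..b-x} (\<lambda>t. exp (- s * t) * (F (x + t) - F x)) + integral {0..b-x} (\<lambda>t. exp (- s * t) * (G (x + t) - G x))"
    by (rule integral_add[OF integrable_R[OF assms(1,3)] integrable_R[OF assms(2,3)]])
  finally show ?thesis unfolding lap_right_def by (simp add: algebra_simps)
qed

lemma R_cmul: "lap_right (\<lambda>y. c * F y) x d s = c * lap_right F x d s"
proof -
  have "integral {0..d} (\<lambda>t. exp (- s * t) * (c * F (x+t) - c * F x)) = c * integral {0..d} (\<lambda>t. exp (- s * t) * (F (x + t) - F x))"
    by (subst integral_mult_right[symmetric]) (simp add: algebra_simps)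
  then show ?thesis unfolding lap_right_def by simp
qed

lemma R_shift: "lap_right (\<lambda>y. F y + c) x d s = lap_right F x d s"
  unfolding lap_right_def by simp

lemma R_sum:
  assumes "\<And>j. j \<in> A \<Longrightarrow> continuous_on {a..b} (F j)" "x \<in> {a..b}" "finite A"
  shows "lap_right (\<lambda>y. \<Sum>j\<in>A. F j y) x (b-x) s = (\<Sum>j\<in>A. lap_right (F j) x (b-x) s)"
proof -
  have "integral {0..b-x} (\<lambda>t. exp (- s * t) * ((\<Sum>j\<in>A. F j (x+t)) - (\<Sum>j\<in>A. F j x)))
     = integral {0..b-x} (\<lambda>t. \<Sum>j\<in>A. exp (- s * t) * (F j (x + t) - F j x))"
    by (simp add: sum_subtractf[symmetric] sum_distrib_left)
  also have "\<dots> = (\<Sum>j\<in>A. integral {0..b-x} (\<lambda>t. exp (- s * t) * (F j (x + t) - F j x)))"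
    by (rule integral_sum[OF assms(3) integrable_R[OF assms(1,2)]])
  finally show ?thesis unfolding lap_right_def by (simp add: sum_distrib_left)
qed

lemma R_mono_le:
  assumes "continuous_on {a..b} F" "continuous_on {a..b} G" "x \<in> {a..b}"
    and "\<And>t. t \<in> {0..b-x} \<Longrightarrow> G (x+t) - G x \<le> F (x+t) - F x"
  shows "lap_right G x (b-x) s \<le> lap_right F x (b-x) s"
proof -
  have "integral {0..b-x} (\<lambda>t. exp (- s * t) * (G (x + t) - G x)) \<le> integral {0..b-x} (\<lambda>t. exp (- s * t) * (F (x + t) - F x))"
    by (rule integral_le[OF integrable_R[OF assms(2,3)] integrable_R[OF assms(1,3)]])
       (rule mult_left_mono[OF assms(4)], auto)
  then show ?thesis unfolding lap_right_def by (rule mult_left_mono) simp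
qed

lemma R_nonneg:
  assumes "continuous_on {a..b} F" "x \<in> {a..b}"
    and "\<And>t. t \<in> {0..b-x} \<Longrightarrow> F x \<le> F (x+t)"
  shows "0 \<le> lap_right F x (b-x) s"
  using R_mono_le[OF assms(1) continuous_on_const assms(2), of 0 s] assms(3)
  unfolding lap_right_def by simp

lemma id_integral:
  fixes s d :: real
  assumes "s > 0" "d \<ge> 0"
  shows "integral {0..d} (\<lambda>t. exp (- s * t) * t) = (1 - exp (- s * d) * (1 + s * d)) / s\<^sup>2"
proof -
  let ?A = "\<lambda>t. - (exp (- s * t) * (1 + s * t)) / s\<^sup>2"
  have deriv: "(?A has_vector_derivative exp (- s * t) * t) (at t within {0..d})" for t
  proof -
    have "(?A has_real_derivative exp (- s * t) * t) (at t within {0..d})"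
      apply (rule derivative_eq_intros refl)+
      subgoal using assms by (simp add: power2_eq_square)
      subgoal using assms by (simp add: divide_simps power2_eq_square) (simp add: algebra_simps)
      done
    then show ?thesis by (simp add: has_real_derivative_iff_has_vector_derivative)
  qed
  have "((\<lambda>t. exp (- s * t) * t) has_integral ?A d - ?A 0) {0..d}"
    using fundamental_theorem_of_calculus[OF assms(2), of ?A "\<lambda>t. exp (- s * t) * t"] deriv by blast
  then have "integral {0..d} (\<lambda>t. exp (- s * t) * t) = ?A d - ?A 0" by (rule integral_unique)
  moreover have "?A d - ?A 0 = (1 - exp (- s * d) * (1 + s * d)) / s\<^sup>2"
    using assms(1) by (simp add: divide_simps)
  ultimately show ?thesis by simp
qed

lemma lap_right_id:
  assumes "d > 0"
  shows "((\<lambda>s. lap_right (\<lambda>y. y) x d s) \<longlongrightarrow> 1) at_top"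
proof -
  have "eventually (\<lambda>s. 1 - exp (- s * d) * (1 + s * d) = lap_right (\<lambda>y. y) x d s) at_top"
    using eventually_gt_at_top[of 0]
  proof eventually_elim
    case (elim s)
    then show ?case unfolding lap_right_def using id_integral[OF elim, of d] assms by simp
  qed
  moreover have "((\<lambda>s. 1 - exp (- s * d) * (1 + s * d)) \<longlongrightarrow> 1) at_top" using assms by real_asymp
  ultimately show ?thesis using tendsto_cong[of "\<lambda>s. 1 - exp (- s * d) * (1 + s * d)" "\<lambda>s. lap_right (\<lambda>y. y) x d s" at_top 1] by simp
qed

lemma lap_left_id: "lap_left (\<lambda>y. y) x d s = lap_right (\<lambda>y. y) x d s"
  unfolding lap_left_def lap_right_def by simp

definition LB :: "real \<Rightarrow> (real \<Rightarrow> real) \<Rightarrow> real \<Rightarrow> real \<Rightarrow> bool" where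
  "LB b F x p \<longleftrightarrow> (\<forall>y<p. eventually (\<lambda>s. y < lap_right F x (b-x) s) at_top)"

definition UB :: "real \<Rightarrow> (real \<Rightarrow> real) \<Rightarrow> real \<Rightarrow> real \<Rightarrow> bool" where
  "UB b F x p \<longleftrightarrow> (\<forall>y>p. eventually (\<lambda>s. lap_right F x (b-x) s < y) at_top)"

lemma R_neg: "lap_right (\<lambda>y. - F y) x d s = - lap_right F x d s"
  using R_cmul[of "-1" F x d s] by simp

lemma LB_mono: "LB b F x p \<Longrightarrow> q \<le> p \<Longrightarrow> LB b F x q"
  unfolding LB_def by auto

lemma UB_mono: "UB b F x p \<Longrightarrow> p \<le> q \<Longrightarrow> UB b F x q"
  unfolding UB_def by auto

lemma LB_add:
  assumes "continuous_on {a..b} F" "continuous_on {a..b} G" "x \<in> {a..b}"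
    and "LB b F x p" "LB b G x q"
  shows "LB b (\<lambda>y. F y + G y) x (p + q)"
  unfolding LB_def
proof (intro allI impI)
  fix y assume "y < p + q"
  define e where "e = (p + q - y) / 2"
  have "e > 0" using \<open>y < p + q\<close> by (simp add: e_def)
  have "eventually (\<lambda>s. p - e < lap_right F x (b-x) s) at_top" using assms(4) \<open>e > 0\<close> unfolding LB_def by auto
  moreover have "eventually (\<lambda>s. q - e < lap_right G x (b-x) s) at_top" using assms(5) \<open>e > 0\<close> unfolding LB_def by auto
  ultimately show "eventually (\<lambda>s. y < lap_right (\<lambda>y. F y + G y) x (b-x) s) at_top"
  proof eventually_elim
    case (elim s)
    then show ?case using R_add[OF assms(1-3), of s] unfolding e_def by (simp add: field_simps)
  qed
qed

lemma LB_scale: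
  assumes "c \<ge> 0" "LB b F x p"
  shows "LB b (\<lambda>y. c * F y) x (c * p)"
  unfolding LB_def
proof (intro allI impI)
  fix y assume y: "y < c * p"
  show "eventually (\<lambda>s. y < lap_right (\<lambda>y. c * F y) x (b-x) s) at_top"
  proof (cases "c = 0")
    case True
    then show ?thesis using y by (simp add: R_cmul lap_right_def)
  next
    case False
    then have "c > 0" using assms(1) by simp
    then have "y / c < p" using y by (simp add: field_simps)
    then have "eventually (\<lambda>s. y / c < lap_right F x (b-x) s) at_top" using assms(2) unfolding LB_def by auto
    then show ?thesis
    proof eventually_elim
      case (elim s)
      then show ?case using \<open>c > 0\<close> by (simp add: R_cmul field_simps)
    qed
  qed
qed

lemma UB_negscale:
  assumes "c \<le> 0" "UB b F x p"
  shows "LB b (\<lambda>y. c * F y) x (c * p)"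
  unfolding LB_def
proof (intro allI impI)
  fix y assume y: "y < c * p"
  show "eventually (\<lambda>s. y < lap_right (\<lambda>y. c * F y) x (b-x) s) at_top"
  proof (cases "c = 0")
    case True
    then show ?thesis using y by (simp add: R_cmul lap_right_def)
  next
    case False
    then have "c < 0" using assms(1) by simp
    then have "y / c > p" using y by (simp add: field_simps)
    then have "eventually (\<lambda>s. lap_right F x (b-x) s < y / c) at_top" using assms(2) unfolding UB_def by auto
    then show ?thesis
    proof eventually_elim
      case (elim s)
      then show ?case using \<open>c < 0\<close> by (simp add: R_cmul field_simps)
    qed
  qed
qed

lemma LB_neg: assumes "LB b F x p" shows "UB b (\<lambda>y. - F y) x (- p)"
  unfolding UB_def R_neg
proof (intro allI impI)
  fix y assume "- p < y"
  then have "- y < p" by simp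
  then have "eventually (\<lambda>s. - y < lap_right F x (b-x) s) at_top" using assms unfolding LB_def by blast
  then show "eventually (\<lambda>s. - lap_right F x (b-x) s < y) at_top" by (rule eventually_mono) simp
qed

lemma UB_neg: assumes "UB b F x p" shows "LB b (\<lambda>y. - F y) x (- p)"
  unfolding LB_def R_neg
proof (intro allI impI)
  fix y assume "y < - p"
  then have "p < - y" by simp
  then have "eventually (\<lambda>s. lap_right F x (b-x) s < - y) at_top" using assms unfolding UB_def by blast
  then show "eventually (\<lambda>s. y < - lap_right F x (b-x) s) at_top" by (rule eventually_mono) simp
qed

lemma LB_id: assumes "x < b" shows "LB b (\<lambda>y. y) x 1"
  unfolding LB_def
proof (intro allI impI)
  fix y :: real assume "y < 1"
  have "b - x > 0" using assms by simp
  from order_tendstoD(1)[OF lap_right_id[OF this, of x] \<open>y < 1\<close>]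
  show "eventually (\<lambda>s. y < lap_right (\<lambda>y. y) x (b-x) s) at_top" .
qed

lemma mono_strict:
  assumes cont: "continuous_on {a..b} P"
    and pos: "\<forall>x\<in>{a..<b}. \<exists>y>0. eventually (\<lambda>s. y < lap_right P x (b-x) s) at_top"
    and cd: "a \<le> c" "c \<le> d" "d \<le> b"
  shows "P c \<le> P d"
proof (rule ccontr)
  assume "\<not> P c \<le> P d"
  then have lt: "P d < P c" by simp
  have sub: "{c..d} \<subseteq> {a..b}" using cd by auto
  have "\<exists>x\<in>{c..d}. \<forall>y\<in>{c..d}. P y \<le> P x"
    by (rule continuous_attains_sup) (use cd continuous_on_subset[OF cont sub] in auto)
  then obtain x0 where x0: "x0 \<in> {c..d}" "\<forall>y\<in>{c..d}. P y \<le> P x0" by blast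
  have "x0 \<noteq> d"
  proof
    assume "x0 = d"
    have "c \<in> {c..d}" using cd by simp
    then have "P c \<le> P x0" using x0(2) by blast
    then show False using \<open>x0 = d\<close> lt by simp
  qed
  then have "x0 < d" using x0 by simp
  have x0ab: "x0 \<in> {a..b}" using x0 cd by auto
  have "bounded (P ` {a..b})" by (intro compact_imp_bounded compact_continuous_image cont compact_Icc)
  then obtain B where B0: "\<forall>z\<in>P ` {a..b}. norm z \<le> B" unfolding bounded_iff by blast
  have B: "\<bar>P y\<bar> \<le> B" if "y \<in> {a..b}" for y using B0 that by auto
  have "0 \<le> B" using B[OF x0ab] by simp
  define \<tau> where "\<tau> = d - x0"
  have "\<tau> > 0" using \<open>x0 < d\<close> by (simp add: \<tau>_def)
  have "\<tau> \<le> b - x0" using cd by (simp add: \<tau>_def)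
  define K where "K = 2 * B * (b - a)"
  have bound: "lap_right P x0 (b - x0) s \<le> s\<^sup>2 * exp (- s * \<tau>) * K" if "s > 0" for s
  proof -
    let ?g = "\<lambda>t. exp (- s * t) * (P (x0 + t) - P x0)"
    have int: "?g integrable_on {0..b-x0}" by (rule integrable_R[OF cont x0ab])
    have split: "integral {0..\<tau>} ?g + integral {\<tau>..b-x0} ?g = integral {0..b-x0} ?g"
      by (rule Henstock_Kurzweil_Integration.integral_combine[OF _ \<open>\<tau> \<le> b - x0\<close> int]) (use \<open>\<tau> > 0\<close> in simp)
    have i1: "integral {0..\<tau>} ?g \<le> 0"
    proof -
      have "integral {0..\<tau>} ?g \<le> integral {0..\<tau>} (\<lambda>t. 0::real)"
      proof (rule integral_le)
        show "?g integrable_on {0..\<tau>}" by (rule integrable_on_subinterval[OF int]) (use \<open>\<tau> \<le> b - x0\<close> in auto)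
        show "(\<lambda>t. 0::real) integrable_on {0..\<tau>}" by (rule integrable_0)
        fix t assume "t \<in> {0..\<tau>}"
        then have "x0 + t \<in> {c..d}" using x0 \<tau>_def by auto
        then have "P (x0 + t) \<le> P x0" using x0 by auto
        then show "?g t \<le> 0" by (simp add: mult_nonneg_nonpos)
      qed
      then show ?thesis by simp
    qed
    have i2: "integral {\<tau>..b-x0} ?g \<le> exp (- s * \<tau>) * K"
    proof -
      have "integral {\<tau>..b-x0} ?g \<le> integral {\<tau>..b-x0} (\<lambda>t. exp (- s * \<tau>) * (2 * B))"
      proof (rule integral_le)
        show "?g integrable_on {\<tau>..b-x0}" by (rule integrable_on_subinterval[OF int]) (use \<open>\<tau> > 0\<close> in auto)
        show "(\<lambda>t. exp (- s * \<tau>) * (2 * B)) integrable_on {\<tau>..b-x0}" by (rule integrable_const_ivl)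
        fix t assume t: "t \<in> {\<tau>..b-x0}"
        then have "x0 + t \<in> {a..b}" using x0ab \<open>\<tau> > 0\<close> by auto
        then have "P (x0 + t) - P x0 \<le> 2 * B" using B[OF \<open>x0 + t \<in> {a..b}\<close>] B[OF x0ab] by linarith
        then have "?g t \<le> exp (- s * t) * (2 * B)" by (intro mult_left_mono) auto
        moreover have "exp (- s * t) \<le> exp (- s * \<tau>)" using t \<open>s > 0\<close> by simp
        then have "exp (- s * t) * (2 * B) \<le> exp (- s * \<tau>) * (2 * B)" using \<open>0 \<le> B\<close> by (intro mult_right_mono) auto
        ultimately show "?g t \<le> exp (- s * \<tau>) * (2 * B)" by linarith
      qed
      also have "\<dots> = (b - x0 - \<tau>) * (exp (- s * \<tau>) * (2 * B))"
        using \<open>\<tau> \<le> b - x0\<close> by simp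
      also have "\<dots> \<le> exp (- s * \<tau>) * K"
      proof -
        have "0 \<le> exp (- s * \<tau>) * (2 * B)" using \<open>0 \<le> B\<close> by simp
        moreover have "b - x0 - \<tau> \<le> b - a" using x0ab \<open>\<tau> > 0\<close> by auto
        ultimately have "(b - x0 - \<tau>) * (exp (- s * \<tau>) * (2 * B)) \<le> (b - a) * (exp (- s * \<tau>) * (2 * B))"
          by (simp add: mult_right_mono)
        then show ?thesis by (simp add: K_def algebra_simps)
      qed
      finally show ?thesis .
    qed
    have "integral {0..b-x0} ?g \<le> exp (- s * \<tau>) * K" using split i1 i2 by linarith
    then have "s\<^sup>2 * integral {0..b-x0} ?g \<le> s\<^sup>2 * (exp (- s * \<tau>) * K)"
      by (rule mult_left_mono) simp
    then show ?thesis unfolding lap_right_def by (simp add: mult.assoc)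
  qed
  have "x0 \<in> {a..<b}" using x0ab \<open>x0 < d\<close> cd by simp
  then obtain y where y: "y > 0" "eventually (\<lambda>s. y < lap_right P x0 (b-x0) s) at_top"
    using pos by blast
  have "((\<lambda>s. s\<^sup>2 * exp (- s * \<tau>) * K) \<longlongrightarrow> 0) at_top" using \<open>\<tau> > 0\<close> by real_asymp
  then have "eventually (\<lambda>s. s\<^sup>2 * exp (- s * \<tau>) * K < y) at_top" using y(1) by (auto intro: order_tendstoD(2))
  with y(2) eventually_gt_at_top[of 0]
  have "eventually (\<lambda>s. y < lap_right P x0 (b-x0) s \<and> 0 < s \<and> s\<^sup>2 * exp (- s * \<tau>) * K < y) at_top"
    by (intro eventually_conj)
  then obtain s where "y < lap_right P x0 (b-x0) s" "0 < s" "s\<^sup>2 * exp (- s * \<tau>) * K < y"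
    unfolding eventually_at_top_linorder by auto
  then show False using bound[of s] by linarith
qed

lemma mono_weak:
  assumes cont: "continuous_on {a..b} P"
    and pos: "\<forall>x\<in>{a..<b}. LB b P x 0"
    and cd: "a \<le> c" "c \<le> d" "d \<le> b"
  shows "P c \<le> P d"
proof -
  have key: "P c - P d \<le> e * (b - a)" if "e > 0" for e
  proof -
    have contE: "continuous_on {a..b} (\<lambda>y. e * y)" by (intro continuous_intros)
    have "P c + e * c \<le> P d + e * d"
    proof (rule mono_strict[of a b "\<lambda>y. P y + e * y"])
      show "continuous_on {a..b} (\<lambda>y. P y + e * y)" using cont contE by (intro continuous_on_add)
      show "\<forall>x\<in>{a..<b}. \<exists>y>0. eventually (\<lambda>s. y < lap_right (\<lambda>y. P y + e * y) x (b-x) s) at_top"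
      proof
        fix x assume x: "x \<in> {a..<b}"
        have "LB b (\<lambda>y. e * y) x (e * 1)" using LB_scale[OF _ LB_id, of e x b] that x by auto
        moreover have "LB b P x 0" using pos x by auto
        ultimately have "LB b (\<lambda>y. P y + e * y) x (0 + e * 1)"
          using LB_add[OF cont contE, of x 0 "e * 1"] x by auto
        moreover have "e/2 < 0 + e * 1" using that by simp
        ultimately have ev: "eventually (\<lambda>s. e/2 < lap_right (\<lambda>y. P y + e * y) x (b-x) s) at_top"
          unfolding LB_def by blast
        have "e/2 > 0" using that by simp
        with ev show "\<exists>y>0. eventually (\<lambda>s. y < lap_right (\<lambda>y. P y + e * y) x (b-x) s) at_top"
          by blast
      qed
    qed (use cd in auto)
    then have "P c - P d \<le> e * (d - c)" by (simp add: algebra_simps)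
    also have "\<dots> \<le> e * (b - a)" using cd that by (intro mult_left_mono) auto
    finally show ?thesis .
  qed
  show ?thesis
  proof (rule ccontr)
    assume "\<not> P c \<le> P d"
    then have gt: "P c - P d > 0" by simp
    have "b - a \<ge> 0" using cd by simp
    define e where "e = (P c - P d) / (2 * (b - a + 1))"
    have "e > 0" using gt \<open>b - a \<ge> 0\<close> by (simp add: e_def)
    have "e * (b - a) < P c - P d"
    proof -
      have "e * (b - a) < e * (2 * (b - a + 1))" using \<open>e > 0\<close> \<open>b - a \<ge> 0\<close> by (intro mult_strict_left_mono) auto
      also have "\<dots> = P c - P d" using \<open>b - a \<ge> 0\<close> by (simp add: e_def)
      finally show ?thesis .
    qed
    then show False using key[OF \<open>e > 0\<close>] by linarith
  qed
qed



lemma lowerLD_le_right: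
  assumes "x \<in> {a..<b}"
  shows "lower_LD a b F x \<le> Liminf at_top (\<lambda>s. ereal (lap_right F x (b - x) s))"
  using assms unfolding lower_LD_def by (auto simp: min.coboundedI1)

lemma upperLD_ge_right:
  assumes "x \<in> {a..<b}"
  shows "Limsup at_top (\<lambda>s. ereal (lap_right F x (b - x) s)) \<le> upper_LD a b F x"
  using assms unfolding upper_LD_def by (auto simp: max.coboundedI1)

lemma major_LB:
  assumes "laplace_major a b f U" "x \<in> {a..<b}"
  shows "LB b U x (f x)"
  unfolding LB_def
proof (intro allI impI)
  fix y assume "y < f x"
  have "ereal (f x) \<le> lower_LD a b U x" using assms unfolding laplace_major_def by auto
  also have "\<dots> \<le> Liminf at_top (\<lambda>s. ereal (lap_right U x (b - x) s))" by (rule lowerLD_le_right[OF assms(2)])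
  finally have "ereal y < Liminf at_top (\<lambda>s. ereal (lap_right U x (b - x) s))"
    using \<open>y < f x\<close> by (meson ereal_less(3) order_less_le_trans less_ereal.simps(1))
  from less_LiminfD[OF this] show "eventually (\<lambda>s. y < lap_right U x (b-x) s) at_top" by simp
qed

lemma minor_UB:
  assumes "laplace_minor a b f V" "x \<in> {a..<b}"
  shows "UB b V x (f x)"
  unfolding UB_def
proof (intro allI impI)
  fix y assume "f x < y"
  have "Limsup at_top (\<lambda>s. ereal (lap_right V x (b - x) s)) \<le> upper_LD a b V x" by (rule upperLD_ge_right[OF assms(2)])
  also have "\<dots> \<le> ereal (f x)" using assms unfolding laplace_minor_def by auto
  finally have "Limsup at_top (\<lambda>s. ereal (lap_right V x (b - x) s)) < ereal y"
    using \<open>f x < y\<close> by (meson order_le_less_trans less_ereal.simps(1))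
  from Limsup_lessD[OF this] show "eventually (\<lambda>s. lap_right V x (b-x) s < y) at_top" by simp
qed

lemma int_upper_eq:
  assumes "laplace_integrable a b f"
  shows "laplace_upper_int a b f = ereal (laplace_integral a b f)"
        "laplace_lower_int a b f = ereal (laplace_integral a b f)"
  using assms unfolding laplace_integrable_def laplace_integral_def
  by (auto simp: ereal_real)

lemma int_minor_le:
  assumes "laplace_integrable a b f" "laplace_minor a b f V"
  shows "V b - V a \<le> laplace_integral a b f"
proof -
  have "ereal (V b - V a) \<le> laplace_lower_int a b f"
    unfolding laplace_lower_int_def using assms(2) by (intro SUP_upper) auto
  then show ?thesis using int_upper_eq(2)[OF assms(1)] by simp
qed

lemma int_major_ge:
  assumes "laplace_integrable a b f" "laplace_major a b f U"
  shows "laplace_integral a b f \<le> U b - U a"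
proof -
  have "laplace_upper_int a b f \<le> ereal (U b - U a)"
    unfolding laplace_upper_int_def using assms(2) by (intro INF_lower) auto
  then show ?thesis using int_upper_eq(1)[OF assms(1)] by simp
qed

lemma int_minor_ex:
  assumes "laplace_integrable a b f" "e > 0"
  obtains V where "laplace_minor a b f V" "laplace_integral a b f - e < V b - V a"
proof -
  have "ereal (laplace_integral a b f - e) < laplace_lower_int a b f"
    using int_upper_eq(2)[OF assms(1)] assms(2) by simp
  then obtain V where "laplace_minor a b f V" "ereal (laplace_integral a b f - e) < ereal (V b - V a)"
    unfolding laplace_lower_int_def less_SUP_iff by auto
  then show ?thesis using that by simp
qed

lemma int_major_ex:
  assumes "laplace_integrable a b f" "e > 0"
  obtains U where "laplace_major a b f U" "U b - U a < laplace_integral a b f + e"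
proof -
  have "laplace_upper_int a b f < ereal (laplace_integral a b f + e)"
    using int_upper_eq(1)[OF assms(1)] assms(2) by simp
  then obtain U where "laplace_major a b f U" "ereal (U b - U a) < ereal (laplace_integral a b f + e)"
    unfolding laplace_upper_int_def INF_less_iff by auto
  then show ?thesis using that by simp
qed

lemma null_sum:
  assumes ab: "a < b" and h0: "\<forall>x\<in>{a..b}. 0 \<le> h x"
    and N: "\<forall>e>0. \<exists>U. continuous_on {a..b} U \<and> (\<forall>x\<in>{a..<b}. LB b U x (h x)) \<and> U b - U a < e"
    and eta: "\<eta> > 0"
  shows "\<exists>\<Phi>. continuous_on {a..b} \<Phi> \<and> (\<forall>x y. a \<le> x \<longrightarrow> x \<le> y \<longrightarrow> y \<le> b \<longrightarrow> \<Phi> x \<le> \<Phi> y)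
     \<and> \<Phi> b - \<Phi> a \<le> \<eta> \<and> (\<forall>x\<in>{a..<b}. 0 < h x \<longrightarrow> (\<forall>y. eventually (\<lambda>s. y < lap_right \<Phi> x (b-x) s) at_top))"
proof -
  define \<epsilon> where "\<epsilon> j = \<eta> / 2 * (1/2) ^ j" for j :: nat
  have \<epsilon>pos: "\<epsilon> j > 0" for j using eta by (simp add: \<epsilon>_def)
  have "\<forall>j. \<exists>U. continuous_on {a..b} U \<and> (\<forall>x\<in>{a..<b}. LB b U x (h x)) \<and> U b - U a < \<epsilon> j"
    using N \<epsilon>pos by blast
  from choice[OF this] obtain U where U: "\<And>j. continuous_on {a..b} (U j)"
    "\<And>j x. x \<in> {a..<b} \<Longrightarrow> LB b (U j) x (h x)" "\<And>j. U j b - U j a < \<epsilon> j"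
    by blast
  have Umono: "U j x \<le> U j y" if "a \<le> x" "x \<le> y" "y \<le> b" for j x y
  proof (rule mono_weak[OF U(1)])
    show "\<forall>x\<in>{a..<b}. LB b (U j) x 0"
    proof
      fix x assume x: "x \<in> {a..<b}"
      then have "0 \<le> h x" using h0 by auto
      then show "LB b (U j) x 0" using LB_mono[OF U(2)[OF x]] by blast
    qed
  qed (use that in auto)
  define u where "u j x = U j x - U j a" for j x
  have u_nn: "0 \<le> u j x" if "x \<in> {a..b}" for j x using Umono[of a x j] that by (auto simp: u_def)
  have u_le: "u j x \<le> \<epsilon> j" if "x \<in> {a..b}" for j x using Umono[of x b j] U(3)[of j] that by (auto simp: u_def)
  have u_mono: "u j x \<le> u j y" if "a \<le> x" "x \<le> y" "y \<le> b" for j x y using Umono[OF that] by (simp add: u_def)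
  have ucont: "continuous_on {a..b} (u j)" for j
    unfolding u_def by (intro continuous_on_diff U(1) continuous_on_const)
  have sum\<epsilon>: "summable \<epsilon>" unfolding \<epsilon>_def by (intro summable_mult summable_geometric) simp
  have suminf\<epsilon>: "suminf \<epsilon> = \<eta>"
  proof -
    have "suminf \<epsilon> = \<eta> / 2 * (\<Sum>j. (1/2::real) ^ j)" unfolding \<epsilon>_def
      by (intro suminf_mult summable_geometric) simp
    also have "\<dots> = \<eta>" by (simp add: suminf_geometric)
    finally show ?thesis .
  qed
  have summ: "summable (\<lambda>j. u j x)" if "x \<in> {a..b}" for x
    by (rule summable_comparison_test'[OF sum\<epsilon>]) (use u_nn u_le that in auto)
  define \<Phi> where "\<Phi> x = (\<Sum>j. u j x)" for x
  have ul: "uniform_limit {a..b} (\<lambda>n x. \<Sum>i<n. u i x) (\<lambda>x. \<Sum>i. u i x) sequentially"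
    by (rule Weierstrass_m_test[OF _ sum\<epsilon>]) (use u_nn u_le in auto)
  have pc: "continuous_on {a..b} (\<lambda>x. \<Sum>i<n. u i x)" for n by (rule continuous_on_sum) (rule ucont)
  then have ev: "eventually (\<lambda>n. continuous_on {a..b} (\<lambda>x. \<Sum>i<n. u i x)) sequentially" by simp
  have cont: "continuous_on {a..b} \<Phi>" unfolding \<Phi>_def
    by (rule uniform_limit_theorem[OF ev ul trivial_limit_sequentially])
  have mono: "\<Phi> x \<le> \<Phi> y" if "a \<le> x" "x \<le> y" "y \<le> b" for x y
    unfolding \<Phi>_def by (rule suminf_le) (use u_mono that summ in auto)
  have "\<Phi> a = 0" by (simp add: \<Phi>_def u_def)
  moreover have "\<Phi> b \<le> \<eta>"
    unfolding \<Phi>_def suminf\<epsilon>[symmetric] by (rule suminf_le) (use u_le summ sum\<epsilon> ab in auto)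
  ultimately have incr: "\<Phi> b - \<Phi> a \<le> \<eta>" by simp
  have deriv: "\<forall>y. eventually (\<lambda>s. y < lap_right \<Phi> x (b-x) s) at_top" if x: "x \<in> {a..<b}" "0 < h x" for x
  proof
    fix y
    obtain N :: nat where N: "y < real N * (h x / 2)" using ex_less_of_nat_mult[of "h x / 2" y] x(2) by auto
    have xab: "x \<in> {a..b}" using x by auto
    define P where "P z = (\<Sum>j<N. u j z)" for z
    have Pcont: "continuous_on {a..b} P" unfolding P_def by (intro continuous_on_sum ucont)
    have RP: "lap_right P x (b-x) s = (\<Sum>j<N. lap_right (U j) x (b-x) s)" for s
    proof -
      have "lap_right P x (b-x) s = (\<Sum>j<N. lap_right (u j) x (b-x) s)"
        unfolding P_def by (rule R_sum[OF ucont xab]) simp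
      also have "\<dots> = (\<Sum>j<N. lap_right (U j) x (b-x) s)"
        by (simp add: u_def lap_right_def)
      finally show ?thesis .
    qed
    have RPhi: "lap_right P x (b-x) s \<le> lap_right \<Phi> x (b-x) s" for s
    proof (rule R_mono_le[OF cont Pcont xab])
      fix t assume t: "t \<in> {0..b-x}"
      then have xt: "x + t \<in> {a..b}" using xab by auto
      have "P (x + t) - P x = (\<Sum>j<N. u j (x + t) - u j x)" by (simp add: P_def sum_subtractf)
      also have "\<dots> \<le> (\<Sum>j. u j (x + t) - u j x)"
        by (rule sum_le_suminf) (use summable_diff[OF summ[OF xt] summ[OF xab]] u_mono xab t in auto)
      also have "\<dots> = \<Phi> (x + t) - \<Phi> x" unfolding \<Phi>_def by (rule suminf_diff[OF summ[OF xt] summ[OF xab], symmetric])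
      finally show "P (x + t) - P x \<le> \<Phi> (x + t) - \<Phi> x" .
    qed
    have "eventually (\<lambda>s. \<forall>j\<in>{..<N}. h x / 2 < lap_right (U j) x (b-x) s) at_top"
    proof (rule eventually_ball_finite)
      show "\<forall>j\<in>{..<N}. eventually (\<lambda>s. h x / 2 < lap_right (U j) x (b-x) s) at_top"
      proof
        fix j assume "j \<in> {..<N}"
        have "h x / 2 < h x" using x(2) by simp
        then show "eventually (\<lambda>s. h x / 2 < lap_right (U j) x (b-x) s) at_top"
          using U(2)[OF x(1), of j] unfolding LB_def by blast
      qed
    qed simp
    then show "eventually (\<lambda>s. y < lap_right \<Phi> x (b-x) s) at_top"
    proof eventually_elim
      case (elim s)
      have "real N * (h x / 2) = (\<Sum>j<N. h x / 2)" by simp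
      also have "\<dots> \<le> (\<Sum>j<N. lap_right (U j) x (b-x) s)" using elim by (intro sum_mono less_imp_le) auto
      also have "\<dots> \<le> lap_right \<Phi> x (b-x) s" using RPhi[of s] RP[of s] by simp
      finally show ?case using N by linarith
    qed
  qed
  show ?thesis using cont mono incr deriv by blast
qed

lemma LB_combo:
  fixes h :: "real \<Rightarrow> real"
  assumes Pc: "continuous_on {a..b} P" and Vc: "continuous_on {a..b} V" and x: "x \<in> {a..<b}"
    and h0: "\<forall>x\<in>{a..b}. 0 \<le> h x"
    and Pm: "\<And>x y. a \<le> x \<Longrightarrow> x \<le> y \<Longrightarrow> y \<le> b \<Longrightarrow> P x \<le> P y"
    and Pd: "\<And>x. x \<in> {a..<b} \<Longrightarrow> 0 < h x \<Longrightarrow> (\<forall>y. eventually (\<lambda>s. y < lap_right P x (b-x) s) at_top)"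
    and V0: "\<forall>x\<in>{a..<b}. h x = 0 \<longrightarrow> UB b V x 0"
    and Vb: "\<forall>x\<in>{a..<b}. \<exists>C. UB b V x C"
  shows "LB b (\<lambda>z. P z + - V z) x 0"
proof -
  have xab: "x \<in> {a..b}" using x by auto
  have mVc: "continuous_on {a..b} (\<lambda>z. - V z)" using Vc by (rule continuous_on_minus)
  show ?thesis
  proof (cases "h x = 0")
    case True
    have "UB b V x 0" using V0 x True by blast
    then have LV: "LB b (\<lambda>z. - V z) x (- 0)" by (rule UB_neg)
    have LP: "LB b P x 0"
      unfolding LB_def
    proof (intro allI impI)
      fix y :: real assume "y < 0"
      have "\<forall>s. y < lap_right P x (b-x) s"
      proof
        fix s
        have "0 \<le> lap_right P x (b-x) s"
        proof (rule R_nonneg[OF Pc xab])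
          fix t assume "t \<in> {0..b-x}"
          then show "P x \<le> P (x + t)" using xab by (intro Pm) auto
        qed
        then show "y < lap_right P x (b-x) s" using \<open>y < 0\<close> by linarith
      qed
      then show "eventually (\<lambda>s. y < lap_right P x (b-x) s) at_top" by (rule always_eventually)
    qed
    have "LB b (\<lambda>y. P y + - V y) x (0 + - 0)" by (rule LB_add[OF Pc mVc xab LP LV])
    then show ?thesis by simp
  next
    case False
    have "0 \<le> h x" using h0 xab by blast
    then have hpos: "0 < h x" using False by simp
    have "\<exists>C. UB b V x C" using Vb x by blast
    then obtain C where C: "UB b V x C" by (rule exE)
    have LV: "LB b (\<lambda>z. - V z) x (- C)" using C by (rule UB_neg)
    have allP: "\<forall>y. eventually (\<lambda>s. y < lap_right P x (b-x) s) at_top" by (rule Pd[OF x hpos])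
    have LP: "LB b P x C" unfolding LB_def
    proof (intro allI impI)
      fix y :: real
      show "eventually (\<lambda>s. y < lap_right P x (b-x) s) at_top" using allP by (rule spec)
    qed
    have "LB b (\<lambda>y. P y + - V y) x (C + - C)" by (rule LB_add[OF Pc mVc xab LP LV])
    then show ?thesis by simp
  qed
qed

lemma minor_bound:
  assumes ab: "a < b" and h0: "\<forall>x\<in>{a..b}. 0 \<le> h x"
    and N: "\<forall>e>0. \<exists>U. continuous_on {a..b} U \<and> (\<forall>x\<in>{a..<b}. LB b U x (h x)) \<and> U b - U a < e"
    and Vc: "continuous_on {a..b} V"
    and V0: "\<forall>x\<in>{a..<b}. h x = 0 \<longrightarrow> UB b V x 0"
    and Vb: "\<forall>x\<in>{a..<b}. \<exists>C. UB b V x C"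
  shows "V b - V a \<le> 0"
proof -
  have "V b - V a \<le> \<eta>" if eta: "\<eta> > 0" for \<eta>
  proof -
    obtain \<Phi> where \<Phi>all: "continuous_on {a..b} \<Phi> \<and> (\<forall>x y. a \<le> x \<longrightarrow> x \<le> y \<longrightarrow> y \<le> b \<longrightarrow> \<Phi> x \<le> \<Phi> y)
     \<and> \<Phi> b - \<Phi> a \<le> \<eta> \<and> (\<forall>x\<in>{a..<b}. 0 < h x \<longrightarrow> (\<forall>y. eventually (\<lambda>s. y < lap_right \<Phi> x (b-x) s) at_top))"
      using null_sum[OF ab h0 N eta] by (rule exE)
    note c1 = conjunct1[OF \<Phi>all]
    note c2 = conjunct1[OF conjunct2[OF \<Phi>all]]
    note c3 = conjunct1[OF conjunct2[OF conjunct2[OF \<Phi>all]]]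
    note c4 = conjunct2[OF conjunct2[OF conjunct2[OF \<Phi>all]]]
    have \<Phi>: "continuous_on {a..b} \<Phi>" "\<And>x y. a \<le> x \<Longrightarrow> x \<le> y \<Longrightarrow> y \<le> b \<Longrightarrow> \<Phi> x \<le> \<Phi> y"
      "\<Phi> b - \<Phi> a \<le> \<eta>" "\<And>x. x \<in> {a..<b} \<Longrightarrow> 0 < h x \<Longrightarrow> (\<forall>y. eventually (\<lambda>s. y < lap_right \<Phi> x (b-x) s) at_top)"
    proof -
      show "continuous_on {a..b} \<Phi>" by (rule c1)
      show "\<Phi> b - \<Phi> a \<le> \<eta>" by (rule c3)
      fix x y assume "a \<le> x" "x \<le> y" "y \<le> b"
      then show "\<Phi> x \<le> \<Phi> y" using c2 by blast
    next
      fix x assume "x \<in> {a..<b}" "0 < h x"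
      then show "\<forall>y. eventually (\<lambda>s. y < lap_right \<Phi> x (b-x) s) at_top" using c4 by blast
    qed
    have mVc: "continuous_on {a..b} (\<lambda>z. - V z)" using Vc by (rule continuous_on_minus)
    have "(\<lambda>z. \<Phi> z + - V z) a \<le> (\<lambda>z. \<Phi> z + - V z) b"
    proof (rule mono_weak[of a b "\<lambda>z. \<Phi> z + - V z"])
      show "continuous_on {a..b} (\<lambda>z. \<Phi> z + - V z)" using \<Phi>(1) mVc by (rule continuous_on_add)
      show "\<forall>x\<in>{a..<b}. LB b (\<lambda>z. \<Phi> z + - V z) x 0"
        using LB_combo[OF \<Phi>(1) Vc _ h0 \<Phi>(2) \<Phi>(4) V0 Vb] by blast
    qed (use ab in auto)
    then show ?thesis using \<Phi>(3) by linarith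
  qed
  then show ?thesis by (rule field_le_epsilon) simp
qed

lemma null_int_le:
  fixes h g :: "real \<Rightarrow> real"
  assumes ab: "a < b" and h0: "\<forall>x\<in>{a..b}. 0 \<le> h x"
    and N: "\<forall>e>0. \<exists>U. continuous_on {a..b} U \<and> (\<forall>x\<in>{a..<b}. LB b U x (h x)) \<and> U b - U a < e"
    and gi: "laplace_integrable a b g"
    and hg: "\<forall>x\<in>{a..<b}. h x = 0 \<longrightarrow> g x = 0"
  shows "laplace_integral a b g \<le> 0"
proof -
  have Vb: "V b - V a \<le> 0" if V: "laplace_minor a b g V" for V
  proof (rule minor_bound[OF ab h0 N])
    show "continuous_on {a..b} V" using V unfolding laplace_minor_def by blast
    show "\<forall>x\<in>{a..<b}. h x = 0 \<longrightarrow> UB b V x 0"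
    proof (intro ballI impI)
      fix x assume x: "x \<in> {a..<b}" "h x = 0"
      then have "g x = 0" using hg by blast
      then show "UB b V x 0" using minor_UB[OF V x(1)] by simp
    qed
    show "\<forall>x\<in>{a..<b}. \<exists>C. UB b V x C" using minor_UB[OF V] by blast
  qed
  show ?thesis
  proof (rule field_le_epsilon)
    fix e :: real assume "e > 0"
    obtain V where V: "laplace_minor a b g V" "laplace_integral a b g - e < V b - V a"
      using int_minor_ex[OF gi \<open>e > 0\<close>] by blast
    then show "laplace_integral a b g \<le> 0 + e" using Vb[OF V(1)] by linarith
  qed
qed

lemma major_cont: "laplace_major a b f U \<Longrightarrow> continuous_on {a..b} U"
  unfolding laplace_major_def by blast

lemma minor_cont: "laplace_minor a b f V \<Longrightarrow> continuous_on {a..b} V"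
  unfolding laplace_minor_def by blast

lemma mvt_general:
  fixes f g :: "real \<Rightarrow> real"
  assumes ab: "a < b" and fd: "darboux_on {a..b} f" and gi: "laplace_integrable a b g"
    and g0: "\<forall>x\<in>{a..b}. 0 \<le> g x" and fgi: "laplace_integrable a b (\<lambda>x. f x * g x)"
  shows "\<exists>\<xi>\<in>{a..b}. laplace_integral a b (\<lambda>x. f x * g x) = f \<xi> * laplace_integral a b g"
proof -
  define I where "I = laplace_integral a b (\<lambda>x. f x * g x)"
  define J where "J = laplace_integral a b g"
  have Ng: "\<forall>e>0. \<exists>U. continuous_on {a..b} U \<and> (\<forall>x\<in>{a..<b}. LB b U x (g x)) \<and> U b - U a < J + e"
  proof (intro allI impI)
    fix e :: real assume "e > 0"
    obtain U where U: "laplace_major a b g U" "U b - U a < J + e"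
      using int_major_ex[OF gi \<open>e > 0\<close>] unfolding J_def by blast
    have "\<forall>x\<in>{a..<b}. LB b U x (g x)" using major_LB[OF U(1)] by blast
    then show "\<exists>U. continuous_on {a..b} U \<and> (\<forall>x\<in>{a..<b}. LB b U x (g x)) \<and> U b - U a < J + e"
      using U(2) major_cont[OF U(1)] by blast
  qed
  have J0: "0 \<le> J"
  proof (rule ccontr)
    assume "\<not> 0 \<le> J"
    then have "- J > 0" by simp
    then obtain U where U: "continuous_on {a..b} U" "\<forall>x\<in>{a..<b}. LB b U x (g x)" "U b - U a < J + (- J)"
      using Ng by blast
    have "U a \<le> U b"
    proof (rule mono_weak[OF U(1)])
      show "\<forall>x\<in>{a..<b}. LB b U x 0"
      proof
        fix x assume x: "x \<in> {a..<b}"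
        then have "0 \<le> g x" using g0 by auto
        then show "LB b U x 0" using LB_mono U(2) x by blast
      qed
    qed (use ab in auto)
    then show False using U(3) by simp
  qed
  show ?thesis
  proof (cases "J = 0")
    case True
    have N0: "\<forall>e>0. \<exists>U. continuous_on {a..b} U \<and> (\<forall>x\<in>{a..<b}. LB b U x (g x)) \<and> U b - U a < e"
      using Ng True by simp
    have Ile: "I \<le> 0"
    proof (rule field_le_epsilon)
      fix e :: real assume "e > 0"
      obtain W where W: "laplace_minor a b (\<lambda>x. f x * g x) W" "I - e < W b - W a"
        using int_minor_ex[OF fgi \<open>e > 0\<close>] unfolding I_def by blast
      have "W b - W a \<le> 0"
      proof (rule minor_bound[OF ab g0 N0])
        show "continuous_on {a..b} W" by (rule minor_cont[OF W(1)])
        show "\<forall>x\<in>{a..<b}. g x = 0 \<longrightarrow> UB b W x 0"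
        proof (intro ballI impI)
          fix x assume x: "x \<in> {a..<b}" "g x = 0"
          show "UB b W x 0" using minor_UB[OF W(1) x(1)] x(2) by simp
        qed
        show "\<forall>x\<in>{a..<b}. \<exists>C. UB b W x C" using minor_UB[OF W(1)] by blast
      qed
      then show "I \<le> 0 + e" using W(2) by linarith
    qed
    have Ige: "- I \<le> 0"
    proof (rule field_le_epsilon)
      fix e :: real assume "e > 0"
      obtain Z where Z: "laplace_major a b (\<lambda>x. f x * g x) Z" "Z b - Z a < I + e"
        using int_major_ex[OF fgi \<open>e > 0\<close>] unfolding I_def by blast
      have "(\<lambda>z. - Z z) b - (\<lambda>z. - Z z) a \<le> 0"
      proof (rule minor_bound[OF ab g0 N0])
        show "continuous_on {a..b} (\<lambda>z. - Z z)" by (rule continuous_on_minus[OF major_cont[OF Z(1)]])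
        show "\<forall>x\<in>{a..<b}. g x = 0 \<longrightarrow> UB b (\<lambda>z. - Z z) x 0"
        proof (intro ballI impI)
          fix x assume x: "x \<in> {a..<b}" "g x = 0"
          show "UB b (\<lambda>z. - Z z) x 0" using LB_neg[OF major_LB[OF Z(1) x(1)]] x(2) by simp
        qed
        show "\<forall>x\<in>{a..<b}. \<exists>C. UB b (\<lambda>z. - Z z) x C"
        proof
          fix x assume x: "x \<in> {a..<b}"
          show "\<exists>C. UB b (\<lambda>z. - Z z) x C" using LB_neg[OF major_LB[OF Z(1) x]] by blast
        qed
      qed
      then show "- I \<le> 0 + e" using Z(2) by simp
    qed
    have "I = f a * J" using Ile Ige True by simp
    moreover have "a \<in> {a..b}" using ab by simp
    ultimately show ?thesis unfolding I_def J_def by blast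
  next
    case False
    then have Jpos: "0 < J" using J0 by simp
    define c where "c = I / J"
    have IcJ: "I = c * J" using Jpos by (simp add: c_def)
    have Zm: "\<And>x. x \<in> {a..<b} \<Longrightarrow> x \<in> {a..b}" by auto
    have ex1: "\<exists>x1\<in>{a..b}. f x1 \<le> c"
    proof (rule ccontr)
      assume "\<not> (\<exists>x1\<in>{a..b}. f x1 \<le> c)"
      then have fc: "\<forall>x\<in>{a..b}. c < f x" by auto
      define h where "h x = (f x - c) * g x" for x
      have h0: "\<forall>x\<in>{a..b}. 0 \<le> h x"
      proof
        fix x assume x: "x \<in> {a..b}"
        have "c < f x" using fc x by blast
        then have "0 \<le> f x - c" by simp
        moreover have "0 \<le> g x" using g0 x by auto
        ultimately show "0 \<le> h x" unfolding h_def by (rule mult_nonneg_nonneg)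
      qed
      have hg: "\<forall>x\<in>{a..<b}. h x = 0 \<longrightarrow> g x = 0"
      proof (intro ballI impI)
        fix x assume x: "x \<in> {a..<b}" "h x = 0"
        have "f x - c \<noteq> 0" using fc x(1) by auto
        then show "g x = 0" using x(2) by (simp add: h_def)
      qed
      have N: "\<forall>e>0. \<exists>U. continuous_on {a..b} U \<and> (\<forall>x\<in>{a..<b}. LB b U x (h x)) \<and> U b - U a < e"
      proof (intro allI impI)
        fix e :: real assume "e > 0"
        define e' where "e' = e / (2 * (1 + \<bar>c\<bar>))"
        have "e' > 0" using \<open>e > 0\<close> by (simp add: e'_def)
        have cpos: "0 < 1 + \<bar>c\<bar>" by (simp add: add_pos_nonneg)
        have "e' * (1 + \<bar>c\<bar>) = e / 2" unfolding e'_def using cpos by (simp add: field_simps)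
        then have e'b: "e' * (1 + \<bar>c\<bar>) < e" using \<open>e > 0\<close> by linarith
        obtain Z where Z: "laplace_major a b (\<lambda>x. f x * g x) Z" "Z b - Z a < I + e'"
          using int_major_ex[OF fgi \<open>e' > 0\<close>] unfolding I_def by blast
        have Zc: "continuous_on {a..b} Z" by (rule major_cont[OF Z(1)])
        show "\<exists>U. continuous_on {a..b} U \<and> (\<forall>x\<in>{a..<b}. LB b U x (h x)) \<and> U b - U a < e"
        proof (cases "c \<ge> 0")
          case True
          obtain G where G: "laplace_minor a b g G" "J - e' < G b - G a"
            using int_minor_ex[OF gi \<open>e' > 0\<close>] unfolding J_def by blast
          have cGc: "continuous_on {a..b} (\<lambda>z. (- c) * G z)" by (rule continuous_on_mult_left[OF minor_cont[OF G(1)]])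
          define U where "U z = Z z + (- c) * G z" for z
          have Uc: "continuous_on {a..b} U" unfolding U_def by (rule continuous_on_add[OF Zc cGc])
          have UL: "\<forall>x\<in>{a..<b}. LB b U x (h x)"
          proof
            fix x assume x: "x \<in> {a..<b}"
            have L1: "LB b Z x (f x * g x)" by (rule major_LB[OF Z(1) x])
            have L2: "LB b (\<lambda>z. (- c) * G z) x ((- c) * g x)"
              by (rule UB_negscale) (use True minor_UB[OF G(1) x] in auto)
            have "LB b (\<lambda>y. Z y + (- c) * G y) x (f x * g x + (- c) * g x)"
              by (rule LB_add[OF Zc cGc Zm[OF x] L1 L2])
            moreover have "f x * g x + (- c) * g x = h x" by (simp add: h_def algebra_simps)
            ultimately show "LB b U x (h x)" unfolding U_def by simp
          qed
          have "c * (J - e') \<le> c * (G b - G a)" using True G(2) by (intro mult_left_mono) auto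
          then have "U b - U a < e' * (1 + c)"
            using Z(2) IcJ by (simp add: U_def algebra_simps)
          also have "\<dots> \<le> e' * (1 + \<bar>c\<bar>)" using True by simp
          finally have "U b - U a < e" using e'b by linarith
          then show ?thesis using Uc UL by blast
        next
          case False
          obtain G where G: "laplace_major a b g G" "G b - G a < J + e'"
            using int_major_ex[OF gi \<open>e' > 0\<close>] unfolding J_def by blast
          have cGc: "continuous_on {a..b} (\<lambda>z. (- c) * G z)" by (rule continuous_on_mult_left[OF major_cont[OF G(1)]])
          define U where "U z = Z z + (- c) * G z" for z
          have Uc: "continuous_on {a..b} U" unfolding U_def by (rule continuous_on_add[OF Zc cGc])
          have UL: "\<forall>x\<in>{a..<b}. LB b U x (h x)"
          proof
            fix x assume x: "x \<in> {a..<b}"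
            have L1: "LB b Z x (f x * g x)" by (rule major_LB[OF Z(1) x])
            have L2: "LB b (\<lambda>z. (- c) * G z) x ((- c) * g x)"
              by (rule LB_scale) (use False major_LB[OF G(1) x] in auto)
            have "LB b (\<lambda>y. Z y + (- c) * G y) x (f x * g x + (- c) * g x)"
              by (rule LB_add[OF Zc cGc Zm[OF x] L1 L2])
            moreover have "f x * g x + (- c) * g x = h x" by (simp add: h_def algebra_simps)
            ultimately show "LB b U x (h x)" unfolding U_def by simp
          qed
          have "(- c) * (G b - G a) \<le> (- c) * (J + e')" using False G(2) by (intro mult_left_mono) auto
          then have "U b - U a < e' * (1 - c)"
            using Z(2) IcJ by (simp add: U_def algebra_simps)
          also have "\<dots> = e' * (1 + \<bar>c\<bar>)" using False by simp
          finally have "U b - U a < e" using e'b by linarith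
          then show ?thesis using Uc UL by blast
        qed
      qed
      have "J \<le> 0" using null_int_le[OF ab h0 N gi hg] unfolding J_def .
      then show False using Jpos by simp
    qed
    have ex2: "\<exists>x2\<in>{a..b}. c \<le> f x2"
    proof (rule ccontr)
      assume "\<not> (\<exists>x2\<in>{a..b}. c \<le> f x2)"
      then have fc: "\<forall>x\<in>{a..b}. f x < c" by auto
      define h where "h x = (c - f x) * g x" for x
      have h0: "\<forall>x\<in>{a..b}. 0 \<le> h x"
      proof
        fix x assume x: "x \<in> {a..b}"
        have "f x < c" using fc x by blast
        then have "0 \<le> c - f x" by simp
        moreover have "0 \<le> g x" using g0 x by auto
        ultimately show "0 \<le> h x" unfolding h_def by (rule mult_nonneg_nonneg)
      qed
      have hg: "\<forall>x\<in>{a..<b}. h x = 0 \<longrightarrow> g x = 0"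
      proof (intro ballI impI)
        fix x assume x: "x \<in> {a..<b}" "h x = 0"
        have "c - f x \<noteq> 0" using fc x(1) by auto
        then show "g x = 0" using x(2) by (simp add: h_def)
      qed
      have N: "\<forall>e>0. \<exists>U. continuous_on {a..b} U \<and> (\<forall>x\<in>{a..<b}. LB b U x (h x)) \<and> U b - U a < e"
      proof (intro allI impI)
        fix e :: real assume "e > 0"
        define e' where "e' = e / (2 * (1 + \<bar>c\<bar>))"
        have "e' > 0" using \<open>e > 0\<close> by (simp add: e'_def)
        have cpos: "0 < 1 + \<bar>c\<bar>" by (simp add: add_pos_nonneg)
        have "e' * (1 + \<bar>c\<bar>) = e / 2" unfolding e'_def using cpos by (simp add: field_simps)
        then have e'b: "e' * (1 + \<bar>c\<bar>) < e" using \<open>e > 0\<close> by linarith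
        obtain Z where Z: "laplace_minor a b (\<lambda>x. f x * g x) Z" "I - e' < Z b - Z a"
          using int_minor_ex[OF fgi \<open>e' > 0\<close>] unfolding I_def by blast
        have mZc: "continuous_on {a..b} (\<lambda>z. - Z z)" by (rule continuous_on_minus[OF minor_cont[OF Z(1)]])
        show "\<exists>U. continuous_on {a..b} U \<and> (\<forall>x\<in>{a..<b}. LB b U x (h x)) \<and> U b - U a < e"
        proof (cases "c \<ge> 0")
          case True
          obtain G where G: "laplace_major a b g G" "G b - G a < J + e'"
            using int_major_ex[OF gi \<open>e' > 0\<close>] unfolding J_def by blast
          have cGc: "continuous_on {a..b} (\<lambda>z. c * G z)" by (rule continuous_on_mult_left[OF major_cont[OF G(1)]])
          define U where "U z = - Z z + c * G z" for z
          have Uc: "continuous_on {a..b} U" unfolding U_def by (rule continuous_on_add[OF mZc cGc])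
          have UL: "\<forall>x\<in>{a..<b}. LB b U x (h x)"
          proof
            fix x assume x: "x \<in> {a..<b}"
            have L1: "LB b (\<lambda>z. - Z z) x (- (f x * g x))" by (rule UB_neg[OF minor_UB[OF Z(1) x]])
            have L2: "LB b (\<lambda>z. c * G z) x (c * g x)"
              by (rule LB_scale) (use True major_LB[OF G(1) x] in auto)
            have "LB b (\<lambda>y. - Z y + c * G y) x (- (f x * g x) + c * g x)"
              by (rule LB_add[OF mZc cGc Zm[OF x] L1 L2])
            moreover have "- (f x * g x) + c * g x = h x" by (simp add: h_def algebra_simps)
            ultimately show "LB b U x (h x)" unfolding U_def by simp
          qed
          have "c * (G b - G a) \<le> c * (J + e')" using True G(2) by (intro mult_left_mono) auto
          then have "U b - U a < e' * (1 + c)"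
            using Z(2) IcJ by (simp add: U_def algebra_simps)
          also have "\<dots> \<le> e' * (1 + \<bar>c\<bar>)" using True by simp
          finally have "U b - U a < e" using e'b by linarith
          then show ?thesis using Uc UL by blast
        next
          case False
          obtain G where G: "laplace_minor a b g G" "J - e' < G b - G a"
            using int_minor_ex[OF gi \<open>e' > 0\<close>] unfolding J_def by blast
          have cGc: "continuous_on {a..b} (\<lambda>z. c * G z)" by (rule continuous_on_mult_left[OF minor_cont[OF G(1)]])
          define U where "U z = - Z z + c * G z" for z
          have Uc: "continuous_on {a..b} U" unfolding U_def by (rule continuous_on_add[OF mZc cGc])
          have UL: "\<forall>x\<in>{a..<b}. LB b U x (h x)"
          proof
            fix x assume x: "x \<in> {a..<b}"
            have L1: "LB b (\<lambda>z. - Z z) x (- (f x * g x))" by (rule UB_neg[OF minor_UB[OF Z(1) x]])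
            have L2: "LB b (\<lambda>z. c * G z) x (c * g x)"
              by (rule UB_negscale) (use False minor_UB[OF G(1) x] in auto)
            have "LB b (\<lambda>y. - Z y + c * G y) x (- (f x * g x) + c * g x)"
              by (rule LB_add[OF mZc cGc Zm[OF x] L1 L2])
            moreover have "- (f x * g x) + c * g x = h x" by (simp add: h_def algebra_simps)
            ultimately show "LB b U x (h x)" unfolding U_def by simp
          qed
          have "(- c) * (J - e') \<le> (- c) * (G b - G a)" using False G(2) by (intro mult_left_mono) auto
          then have "U b - U a < e' * (1 - c)"
            using Z(2) IcJ by (simp add: U_def algebra_simps)
          also have "\<dots> = e' * (1 + \<bar>c\<bar>)" using False by simp
          finally have "U b - U a < e" using e'b by linarith
          then show ?thesis using Uc UL by blast
        qed
      qed
      have "J \<le> 0" using null_int_le[OF ab h0 N gi hg] unfolding J_def .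
      then show False using Jpos by simp
    qed
    obtain x1 where x1: "x1 \<in> {a..b}" "f x1 \<le> c" using ex1 by blast
    obtain x2 where x2: "x2 \<in> {a..b}" "c \<le> f x2" using ex2 by blast
    have mm: "min (f x1) (f x2) \<le> c" "c \<le> max (f x1) (f x2)" using x1 x2 by auto
    have "\<exists>z\<in>{a..b}. f z = c"
    proof (cases "x1 \<le> x2")
      case True
      then obtain z where "z \<in> {x1..x2}" "f z = c"
        using fd x1(1) x2(1) mm unfolding darboux_on_def by blast
      then show ?thesis using x1(1) x2(1) by auto
    next
      case False
      have mm2: "min (f x2) (f x1) \<le> c" "c \<le> max (f x2) (f x1)" using mm by auto
      from False have "x2 \<le> x1" by simp
      then obtain z where "z \<in> {x2..x1}" "f z = c"
        using fd x1(1) x2(1) mm2 unfolding darboux_on_def by blast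
      then show ?thesis using x1(1) x2(1) by auto
    qed
    then obtain z where "z \<in> {a..b}" "f z = c" by blast
    then show ?thesis using IcJ unfolding I_def J_def by auto
  qed
qed

lemma UB_id: assumes "x < b" shows "UB b (\<lambda>y. y) x 1"
  unfolding UB_def
proof (intro allI impI)
  fix y :: real assume "1 < y"
  have "b - x > 0" using assms by simp
  from order_tendstoD(2)[OF lap_right_id[OF this, of x] \<open>1 < y\<close>]
  show "eventually (\<lambda>s. lap_right (\<lambda>y. y) x (b-x) s < y) at_top" .
qed

lemma id_LD:
  assumes ab: "a < b" and x: "x \<in> {a..b}"
  shows "lower_LD a b (\<lambda>y. y) x = 1" "upper_LD a b (\<lambda>y. y) x = 1"
proof -
  have R: "Liminf at_top (\<lambda>s. ereal (lap_right (\<lambda>y. y) x d s)) = 1 \<and>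
           Limsup at_top (\<lambda>s. ereal (lap_right (\<lambda>y. y) x d s)) = 1" if "d > 0" for d
  proof -
    have t: "((\<lambda>s. ereal (lap_right (\<lambda>y. y) x d s)) \<longlongrightarrow> ereal 1) at_top"
      using lap_right_id[OF that, of x] by (simp only: lim_ereal)
    show ?thesis using lim_imp_Liminf[OF trivial_limit_at_top_linorder t]
      lim_imp_Limsup[OF trivial_limit_at_top_linorder t] by simp
  qed
  have L: "Liminf at_top (\<lambda>s. ereal (lap_left (\<lambda>y. y) x d s)) = 1 \<and>
           Limsup at_top (\<lambda>s. ereal (lap_left (\<lambda>y. y) x d s)) = 1" if "d > 0" for d
    using R[OF that] by (simp only: lap_left_id)
  show "lower_LD a b (\<lambda>y. y) x = 1" "upper_LD a b (\<lambda>y. y) x = 1"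
  proof -
    consider "x = a" | "x \<noteq> a" "x = b" | "x \<noteq> a" "x \<noteq> b" by blast
    then have "lower_LD a b (\<lambda>y. y) x = 1 \<and> upper_LD a b (\<lambda>y. y) x = 1"
    proof cases
      case 1
      then have "b - x > 0" using ab by simp
      then show ?thesis using R[of "b - x"] 1 unfolding lower_LD_def upper_LD_def by simp
    next
      case 2
      then have "x - a > 0" using ab by simp
      then show ?thesis using L[of "x - a"] 2 unfolding lower_LD_def upper_LD_def by simp
    next
      case 3
      then have "b - x > 0" "x - a > 0" using x by auto
      then show ?thesis using R[of "b - x"] L[of "x - a"] 3 unfolding lower_LD_def upper_LD_def by simp
    qed
    then show "lower_LD a b (\<lambda>y. y) x = 1" "upper_LD a b (\<lambda>y. y) x = 1" by simp_all
  qed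
qed

lemma one_int:
  assumes ab: "a < b"
  shows "laplace_integrable a b (\<lambda>x. 1) \<and> laplace_integral a b (\<lambda>x. 1) = b - a"
proof -
  have idc: "continuous_on {a..b} (\<lambda>y::real. y)" by (rule continuous_on_id)
  have maj: "laplace_major a b (\<lambda>x. 1) (\<lambda>y. y)"
    unfolding laplace_major_def using idc id_LD[OF ab] by simp
  have mino: "laplace_minor a b (\<lambda>x. 1) (\<lambda>y. y)"
    unfolding laplace_minor_def using idc id_LD[OF ab] by simp
  have minb: "V b - V a \<le> b - a" if V: "laplace_minor a b (\<lambda>x. 1) V" for V
  proof -
    have mVc: "continuous_on {a..b} (\<lambda>z. - V z)" by (rule continuous_on_minus[OF minor_cont[OF V]])
    have "(\<lambda>z. z + - V z) a \<le> (\<lambda>z. z + - V z) b"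
    proof (rule mono_weak[of a b "\<lambda>z. z + - V z"])
      show "continuous_on {a..b} (\<lambda>z. z + - V z)" by (rule continuous_on_add[OF idc mVc])
      show "\<forall>x\<in>{a..<b}. LB b (\<lambda>z. z + - V z) x 0"
      proof
        fix x assume x: "x \<in> {a..<b}"
        have L1: "LB b (\<lambda>y. y) x 1" using x by (intro LB_id) auto
        have L2: "LB b (\<lambda>z. - V z) x (- 1)" using UB_neg[OF minor_UB[OF V x]] by simp
        have "LB b (\<lambda>z. z + - V z) x (1 + - 1)" by (rule LB_add[OF idc mVc _ L1 L2]) (use x in auto)
        then show "LB b (\<lambda>z. z + - V z) x 0" by simp
      qed
    qed (use ab in auto)
    then show ?thesis by simp
  qed
  have majb: "b - a \<le> U b - U a" if U: "laplace_major a b (\<lambda>x. 1) U" for U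
  proof -
    have Uc: "continuous_on {a..b} U" by (rule major_cont[OF U])
    have mic: "continuous_on {a..b} (\<lambda>z::real. - z)" by (rule continuous_on_minus[OF idc])
    have "(\<lambda>z. U z + - z) a \<le> (\<lambda>z. U z + - z) b"
    proof (rule mono_weak[of a b "\<lambda>z. U z + - z"])
      show "continuous_on {a..b} (\<lambda>z. U z + - z)" by (rule continuous_on_add[OF Uc mic])
      show "\<forall>x\<in>{a..<b}. LB b (\<lambda>z. U z + - z) x 0"
      proof
        fix x assume x: "x \<in> {a..<b}"
        have L1: "LB b U x 1" using major_LB[OF U x] by simp
        have L2: "LB b (\<lambda>z. - z) x (- 1)" using x by (intro UB_neg UB_id) auto
        have "LB b (\<lambda>z. U z + - z) x (1 + - 1)" by (rule LB_add[OF Uc mic _ L1 L2]) (use x in auto)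
        then show "LB b (\<lambda>z. U z + - z) x 0" by simp
      qed
    qed (use ab in auto)
    then show ?thesis by simp
  qed
  have lo: "laplace_lower_int a b (\<lambda>x. 1) = ereal (b - a)"
  proof (rule antisym)
    show "laplace_lower_int a b (\<lambda>x. 1) \<le> ereal (b - a)"
      unfolding laplace_lower_int_def by (rule SUP_least) (use minb in auto)
    have "ereal ((\<lambda>y. y) b - (\<lambda>y. y) a) \<le> laplace_lower_int a b (\<lambda>x. 1)"
      unfolding laplace_lower_int_def by (rule SUP_upper) (use mino in auto)
    then show "ereal (b - a) \<le> laplace_lower_int a b (\<lambda>x. 1)" by simp
  qed
  have up: "laplace_upper_int a b (\<lambda>x. 1) = ereal (b - a)"
  proof (rule antisym)
    show "ereal (b - a) \<le> laplace_upper_int a b (\<lambda>x. 1)"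
      unfolding laplace_upper_int_def by (rule INF_greatest) (use majb in auto)
    have "laplace_upper_int a b (\<lambda>x. 1) \<le> ereal ((\<lambda>y. y) b - (\<lambda>y. y) a)"
      unfolding laplace_upper_int_def by (rule INF_lower) (use maj in auto)
    then show "laplace_upper_int a b (\<lambda>x. 1) \<le> ereal (b - a)" by simp
  qed
  show ?thesis unfolding laplace_integrable_def laplace_integral_def using lo up by simp
qed

theorem theorem8p1:
  fixes f g :: "real \<Rightarrow> real" and a b :: real
  assumes "a < b"
    and "laplace_integrable a b f"
    and "darboux_on {a..b} f"
    and "laplace_integrable a b g"
    and "\<forall>x\<in>{a..b}. g x \<ge> 0"
    and "laplace_integrable a b (\<lambda>x. f x * g x)"
  shows "(\<exists>\<xi>\<in>{a..b}. laplace_integral a b (\<lambda>x. f x * g x) = f \<xi> * laplace_integral a b g)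
       \<and> (\<exists>\<xi>\<in>{a..b}. laplace_integral a b f = f \<xi> * (b - a))"
proof
  show "\<exists>\<xi>\<in>{a..b}. laplace_integral a b (\<lambda>x. f x * g x) = f \<xi> * laplace_integral a b g"
    by (rule mvt_general[OF assms(1,3,4,5,6)])
  have one: "laplace_integrable a b (\<lambda>x. 1)" "laplace_integral a b (\<lambda>x. 1) = b - a"
    using one_int[OF assms(1)] by auto
  have fi: "laplace_integrable a b (\<lambda>x. f x * 1)" using assms(2) by simp
  have "\<exists>\<xi>\<in>{a..b}. laplace_integral a b (\<lambda>x. f x * 1) = f \<xi> * laplace_integral a b (\<lambda>x. 1)"
    by (rule mvt_general[OF assms(1,3) one(1) _ fi]) simp
  then show "\<exists>\<xi>\<in>{a..b}. laplace_integral a b f = f \<xi> * (b - a)" using one(2) by simp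
qed

end
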